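(* Let $P_s(u)=u^3/3+u^2+s$, $\mathbb{H}=\{z:\mathrm{Im}\, z>0\}$, and for $\rho>0$ let $\mathbb{D}^+_\rho=\{s\in\mathbb{H}:|s|<\rho\}$. Write $s^-=s+\tfrac43$. For $s\in\mathbb{H}$ the roots of $P_s$ are distinct, analytic in $s$, and can be labeled $r_1(s),r_2(s),r_3(s)$ so that: (0) For $s\in\mathbb{H}$: $r_1\in-\mathbb{H}$ and $\mathrm{Re}\, r_1<-2$; $r_2\in\mathbb{H}$, $\arg r_2>\arctan(3/2)$ and $\arg(r_2+2)<\pi-\arctan(3/2)$; $r_3\in-\mathbb{H}$ and $\mathrm{Re}\, r_3>0$. (i) For $s\in\mathbb{D}^+_{\sqrt{2/3}}$, with the branch of $\sqrt{s}$ that is positive for $s>0$, $$|r_1+3+s/3|<|s|^2,\qquad |r_2-i\sqrt{s}|<|s|,\qquad |r_3+i\sqrt{s}|<|s|.$$ (ii) For $s^-\in\mathbb{D}^+_{\sqrt{2/3}}$, $$|2+r_1+\sqrt{s^-}|<|s^-|,\qquad |2+r_2-\sqrt{s^-}|<|s^-|,\qquad |r_3-1+s^-/3|<|s^-|^2.$$ (iii) Let $r_j(s;t)$ be the roots of $tu^3/3+u^2+s$, labeled so that $r_j(s;1)=r_j(s)$. If $s\in\mathbb{D}^+_{1/10}$ then $r_2(s;t),r_3(s;t)$ are real analytic in $t\in(0,1)$. If $s^-\in\mathbb{D}^+_{1/10}$ then $r_1(s;t),r_2(s;t)$ are real analytic in $t\in(0,1)$. (iv) If $s\in\mathbb{D}^+_{21/4}$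 then $|r_j(s)|<399/100$ for $j=1,2,3$.
   Context: $\arg$ denotes the principal argument. $-\mathbb{H}$ denotes the open lower half plane. *)

theory Defs
  imports "HOL-Analysis.Analysis"
begin

definition P :: "complex \<Rightarrow> complex \<Rightarrow> complex" where
  "P s u = u ^ 3 / 3 + u ^ 2 + s"

definition Pt :: "real \<Rightarrow> complex \<Rightarrow> complex \<Rightarrow> complex" where
  "Pt t s u = of_real t * u ^ 3 / 3 + u ^ 2 + s"

definition UHP :: "complex set" where
  "UHP = {z. Im z > 0}"

definition Dplus :: "real \<Rightarrow> complex set" where
  "Dplus \<rho> = {s. Im s > 0 \<and> cmod s < \<rho>}"

definition real_analytic_on :: "real set \<Rightarrow> (real \<Rightarrow> complex) \<Rightarrow> bool" where
  "real_analytic_on A f \<longleftrightarrow>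
     (\<forall>t0\<in>A. \<exists>\<delta>>0. \<exists>c::nat \<Rightarrow> complex.
        \<forall>t\<in>A. \<bar>t - t0\<bar> < \<delta> \<longrightarrow> (\<lambda>n. c n * of_real ((t - t0) ^ n)) sums f t)"

definition root_labeling ::
  "complex \<Rightarrow> (real \<Rightarrow> complex) \<Rightarrow> (real \<Rightarrow> complex) \<Rightarrow> (real \<Rightarrow> complex)
    \<Rightarrow> complex \<Rightarrow> complex \<Rightarrow> complex \<Rightarrow> bool" where
  "root_labeling s R1 R2 R3 a1 a2 a3 \<longleftrightarrow>
     (\<forall>t\<in>{0<..1}. Pt t s (R1 t) = 0 \<and> Pt t s (R2 t) = 0 \<and> Pt t s (R3 t) = 0 \<and>
        R1 t \<noteq> R2 t \<and> R1 t \<noteq> R3 t \<and> R2 t \<noteq> R3 t) \<and>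
     continuous_on {0<..1} R1 \<and> continuous_on {0<..1} R2 \<and> continuous_on {0<..1} R3 \<and>
     R1 1 = a1 \<and> R2 1 = a2 \<and> R3 1 = a3"

end

theory Submission
  imports Defs "HOL-Complex_Analysis.Complex_Analysis"
begin

definition O1 :: "complex set" where
  "O1 = {z. Im z < 0 \<and> Re z < 0 \<and> (Re z)^2 - (Im z)^2/3 > 1}"
definition O2 :: "complex set" where
  "O2 = {z. Im z > 0 \<and> (Re z)^2 - (Im z)^2/3 < 1}"
definition O3 :: "complex set" where
  "O3 = {z. Im z < 0 \<and> Re z > 0 \<and> (Re z)^2 - (Im z)^2/3 > 1}"

lemma O_disj: "O1 \<inter> O2 = {}" "O1 \<inter> O3 = {}" "O2 \<inter> O3 = {}"
  by (auto simp: O1_def O2_def O3_def)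

lemma open_O: "open O1" "open O2" "open O3"
  unfolding O1_def O2_def O3_def
  by (auto intro!: open_Collect_conj open_Collect_less continuous_intros)

lemma Im_cube: "Im (z^3) = 3 * (Re z)^2 * Im z - (Im z)^3"
  by (simp add: power3_eq_cube power2_eq_square algebra_simps)

lemma root_region:
  assumes "Im c > 0" "z^3 - 3*z + 3*c = 0"
  shows "z \<in> O1 \<union> O2 \<union> O3"
proof -
  have "Im (z^3 - 3*z + 3*c) = 0" using assms(2) by simp
  hence "Im z * (3*(Re z)^2 - (Im z)^2 - 3) = - 3 * Im c"
    by (simp add: Im_cube algebra_simps power3_eq_cube power2_eq_square)
  hence neg: "Im z * (3*(Re z)^2 - (Im z)^2 - 3) < 0" using assms(1) by simp
  show ?thesis
  proof (cases "Im z > 0")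
    case True
    hence "3*(Re z)^2 - (Im z)^2 - 3 < 0" using neg by (simp add: mult_less_0_iff)
    thus ?thesis using True by (auto simp: O2_def)
  next
    case False
    hence "Im z < 0" and pos: "3*(Re z)^2 - (Im z)^2 - 3 > 0" using neg by (auto simp: mult_less_0_iff)
    moreover have "Re z \<noteq> 0"
    proof
      assume "Re z = 0"
      with pos have "(Im z)^2 + 3 < 0" by simp
      thus False using zero_le_power2[of "Im z"] by linarith
    qed
    ultimately show ?thesis by (auto simp: O1_def O3_def)
  qed
qed

lemma two_O2:
  fixes x1 x2 x3 y1 y2 y3 :: real
  assumes "x1+x2+x3=0" "y1+y2+y3=0" "x1^2-y1^2+(x2^2-y2^2)+(x3^2-y3^2) = 6"
    "y1>0" "y2>0" "x1^2 - y1^2/3 < 1" "x2^2 - y2^2/3 < 1"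
  shows False
proof -
  have x3: "x3 = -(x1+x2)" and y3: "y3 = -(y1+y2)" using assms by linarith+
  have "(x1+x2)^2 \<le> 2*x1^2 + 2*x2^2" 
    using zero_le_power2[of "x1-x2"] by (simp add: power2_eq_square algebra_simps)
  moreover have "(y1+y2)^2 > 0" using assms by simp
  ultimately show False using assms(3,6,7) unfolding x3 y3 by (simp add: power2_eq_square algebra_simps)
qed

lemma O233:
  fixes x1 x2 x3 y1 y2 y3 :: real
  assumes "x1+x2+x3=0" "x1*y1+x2*y2+x3*y3 = 0" "y1>0" "x2>0" "y2<0" "x3>0" "y3<0"
  shows False
proof -
  have "x1 < 0" using assms by linarith
  hence "x1*y1 < 0" "x2*y2<0" "x3*y3<0" using assms by (auto simp: mult_less_0_iff)
  thus False using assms(2) by linarith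
qed

lemma O211:
  fixes x1 x2 x3 y1 y2 y3 :: real
  assumes "x1+x2+x3=0" "x1*y1+x2*y2+x3*y3 = 0" "y1>0" "x2<0" "y2<0" "x3<0" "y3<0"
  shows False
proof -
  have "x1 > 0" using assms by linarith
  hence "x1*y1 > 0" "x2*y2>0" "x3*y3>0" using assms by (auto simp: mult_less_0_iff zero_less_mult_iff)
  thus False using assms(2) by linarith
qed

lemma vieta_real:
  assumes "z1+z2+z3 = 0" "z1*z2+z1*z3+z2*z3 = -3"
  shows "Re z1 + Re z2 + Re z3 = 0" "Im z1 + Im z2 + Im z3 = 0"
    "(Re z1)^2 - (Im z1)^2 + ((Re z2)^2 - (Im z2)^2) + ((Re z3)^2 - (Im z3)^2) = 6"
    "Re z1 * Im z1 + Re z2 * Im z2 + Re z3 * Im z3 = 0"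
proof -
  have sq: "z1^2+z2^2+z3^2 = 6"
  proof -
    have "z1^2+z2^2+z3^2 = (z1+z2+z3)^2 - 2*(z1*z2+z1*z3+z2*z3)" by algebra
    thus ?thesis using assms by simp
  qed
  show "Re z1 + Re z2 + Re z3 = 0" "Im z1 + Im z2 + Im z3 = 0"
    using arg_cong[OF assms(1), of Re] arg_cong[OF assms(1), of Im] by simp_all
  show "(Re z1)^2 - (Im z1)^2 + ((Re z2)^2 - (Im z2)^2) + ((Re z3)^2 - (Im z3)^2) = 6"
    using arg_cong[OF sq, of Re] by (simp add: power2_eq_square)
  have "2*(Re z1 * Im z1 + Re z2 * Im z2 + Re z3 * Im z3) = 0"
    using arg_cong[OF sq, of Im] by (simp add: power2_eq_square algebra_simps)
  thus "Re z1 * Im z1 + Re z2 * Im z2 + Re z3 * Im z3 = 0" by simp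
qed

lemma core:
  assumes v: "z1+z2+z3 = 0" "z1*z2+z1*z3+z2*z3 = -3"
    and m: "z1 \<in> O1 \<union> O2 \<union> O3" "z2 \<in> O1 \<union> O2 \<union> O3" "z3 \<in> O1 \<union> O2 \<union> O3"
  shows "(z1 \<in> O1 \<or> z2 \<in> O1 \<or> z3 \<in> O1) \<and> (z1 \<in> O2 \<or> z2 \<in> O2 \<or> z3 \<in> O2) \<and>
         (z1 \<in> O3 \<or> z2 \<in> O3 \<or> z3 \<in> O3)"
proof -
  note R = vieta_real[OF v]
  have A1: "\<not> (z1 \<in> O2 \<and> z2 \<in> O2)"
    using two_O2[of "Re z1" "Re z2" "Re z3" "Im z1" "Im z2" "Im z3"] R by (auto simp: O2_def)
  have A2: "\<not> (z1 \<in> O2 \<and> z3 \<in> O2)"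
    using two_O2[of "Re z1" "Re z3" "Re z2" "Im z1" "Im z3" "Im z2"] R by (auto simp: O2_def algebra_simps)
  have A3: "\<not> (z2 \<in> O2 \<and> z3 \<in> O2)"
    using two_O2[of "Re z2" "Re z3" "Re z1" "Im z2" "Im z3" "Im z1"] R by (auto simp: O2_def algebra_simps)
  have C: "z1 \<in> O2 \<or> z2 \<in> O2 \<or> z3 \<in> O2"
  proof (rule ccontr)
    assume "\<not> ?thesis"
    hence "Im z1 < 0" "Im z2 < 0" "Im z3 < 0" using m by (auto simp: O1_def O3_def)
    thus False using R(2) by linarith
  qed
  have B3: "\<not> (z1 \<in> O2 \<and> z2 \<in> O3 \<and> z3 \<in> O3)" "\<not> (z2 \<in> O2 \<and> z1 \<in> O3 \<and> z3 \<in> O3)"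
    "\<not> (z3 \<in> O2 \<and> z2 \<in> O3 \<and> z1 \<in> O3)"
    using O233[of "Re z1" "Re z2" "Re z3" "Im z1" "Im z2" "Im z3"]
      O233[of "Re z2" "Re z1" "Re z3" "Im z2" "Im z1" "Im z3"]
      O233[of "Re z3" "Re z2" "Re z1" "Im z3" "Im z2" "Im z1"] R
    by (auto simp: O2_def O3_def algebra_simps)
  have B1: "\<not> (z1 \<in> O2 \<and> z2 \<in> O1 \<and> z3 \<in> O1)" "\<not> (z2 \<in> O2 \<and> z1 \<in> O1 \<and> z3 \<in> O1)"
    "\<not> (z3 \<in> O2 \<and> z2 \<in> O1 \<and> z1 \<in> O1)"
    using O211[of "Re z1" "Re z2" "Re z3" "Im z1" "Im z2" "Im z3"]
      O211[of "Re z2" "Re z1" "Re z3" "Im z2" "Im z1" "Im z3"]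
      O211[of "Re z3" "Re z2" "Re z1" "Im z3" "Im z2" "Im z1"] R
    by (auto simp: O2_def O1_def algebra_simps)
  have D: "\<And>z. z \<in> O1 \<Longrightarrow> z \<notin> O2" "\<And>z. z \<in> O1 \<Longrightarrow> z \<notin> O3" "\<And>z. z \<in> O2 \<Longrightarrow> z \<notin> O3"
    using O_disj by blast+
  have m': "z1 \<in> O1 \<or> z1 \<in> O2 \<or> z1 \<in> O3" "z2 \<in> O1 \<or> z2 \<in> O2 \<or> z2 \<in> O3"
    "z3 \<in> O1 \<or> z3 \<in> O2 \<or> z3 \<in> O3" using m by blast+
  show ?thesis using A1 A2 A3 B1 B3 C m' D by metis
qed

lemma vieta_roots:
  fixes z1 z2 z3 c :: complex
  assumes "z1+z2+z3 = 0" "z1*z2+z1*z3+z2*z3 = -3" "z1^3 - 3*z1 + 3*c = 0"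
  shows "z2^3 - 3*z2 + 3*c = 0"
proof -
  have z3: "z3 = -z1-z2"
  proof -
    have "z3 = (z1+z2+z3) - z1 - z2" by (simp add: algebra_simps)
    also have "\<dots> = -z1-z2" unfolding assms(1) by simp
    finally show ?thesis .
  qed
  have e: "z1^2 + z1*z2 + z2^2 = 3"
  proof -
    have "z1*z2+z1*z3+z2*z3 = -(z1^2 + z1*z2 + z2^2)" unfolding z3 by (simp add: algebra_simps power2_eq_square)
    hence "-(z1^2 + z1*z2 + z2^2) = -3" using assms(2) by metis
    thus ?thesis by (simp only: neg_equal_iff_equal)
  qed
  have c: "3*c = -(z1^3 - 3*z1)" using assms(3) by (simp only: add_eq_0_iff)
  have "z2^3 - 3*z2 + 3*c = (z2 - z1)*(z1^2+z1*z2+z2^2 - 3)" unfolding c by (simp add: algebra_simps power2_eq_square power3_eq_cube)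
  also have "\<dots> = 0" using e by simp
  finally show ?thesis .
qed

lemma three_roots:
  obtains z1 z2 z3 :: complex where "z1+z2+z3=0" "z1*z2+z1*z3+z2*z3 = -3" "z1^3 - 3*z1 + 3*c = 0"
proof -
  define a :: "nat \<Rightarrow> complex" where "a = (\<lambda>i. if i=0 then 3*c else if i=1 then -3 else if i=3 then 1 else 0)"
  obtain z where z: "(\<Sum>i\<le>3. a i * z^i) = 0"
    by (rule fundamental_theorem_of_algebra[of a 3]) (auto simp: a_def)
  have "(\<Sum>i\<le>3. a i * z^i) = z^3 - 3*z + 3*c"
    by (simp add: a_def numeral_3_eq_3 algebra_simps)
  with z have z1: "z^3 - 3*z + 3*c = 0" by simp
  define w where "w = csqrt (12 - 3*z^2)"
  have w2: "w^2 = 12 - 3*z^2" unfolding w_def by simp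
  show ?thesis
  proof (rule that[of z "(-z+w)/2" "(-z-w)/2"])
    show "z + (-z+w)/2 + (-z-w)/2 = 0" by (simp add: field_simps)
    have "z * ((- z + w) / 2) + z * ((- z - w) / 2) + (- z + w) / 2 * ((- z - w) / 2)
        = (-3*z^2 - w^2)/4" by (simp add: field_simps power2_eq_square)
    also have "\<dots> = -3" using w2 by simp
    finally show "z * ((- z + w) / 2) + z * ((- z - w) / 2) + (- z + w) / 2 * ((- z - w) / 2) = -3" .
  qed (rule z1)
qed

lemma all_regions:
  assumes "Im c > 0"
  shows "(\<exists>z\<in>O1. z^3 - 3*z + 3*c = 0) \<and> (\<exists>z\<in>O2. z^3 - 3*z + 3*c = 0) \<and> (\<exists>z\<in>O3. z^3 - 3*z + 3*c = 0)"
proof -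
  obtain z1 z2 z3 where v: "z1+z2+z3=0" "z1*z2+z1*z3+z2*z3 = -3" and r1: "z1^3 - 3*z1 + 3*c = 0"
    by (rule three_roots)
  have r2: "z2^3 - 3*z2 + 3*c = 0" by (rule vieta_roots[OF v r1])
  have r3: "z3^3 - 3*z3 + 3*c = 0"
  proof (rule vieta_roots[of z1 z3 z2])
    show "z1 + z3 + z2 = 0" using v(1) by (simp add: algebra_simps)
    show "z1 * z3 + z1 * z2 + z3 * z2 = - 3" using v(2) by (simp add: algebra_simps)
  qed (rule r1)
  have m: "z1 \<in> O1 \<union> O2 \<union> O3" "z2 \<in> O1 \<union> O2 \<union> O3" "z3 \<in> O1 \<union> O2 \<union> O3"
    using root_region[OF assms] r1 r2 r3 by blast+
  have c: "(z1 \<in> O1 \<or> z2 \<in> O1 \<or> z3 \<in> O1) \<and> (z1 \<in> O2 \<or> z2 \<in> O2 \<or> z3 \<in> O2) \<and>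
         (z1 \<in> O3 \<or> z2 \<in> O3 \<or> z3 \<in> O3)" by (rule core[OF v m])
  have "\<And>Q. z1 \<in> Q \<or> z2 \<in> Q \<or> z3 \<in> Q \<Longrightarrow> \<exists>z\<in>Q. z^3 - 3*z + 3*c = 0"
    using r1 r2 r3 by auto
  thus ?thesis using c by simp
qed

lemma uniq_z:
  assumes "Im c > 0" "z^3 - 3*z + 3*c = 0" "w^3 - 3*w + 3*c = 0"
    and Q: "Q = O1 \<or> Q = O2 \<or> Q = O3" and "z \<in> Q" "w \<in> Q"
  shows "z = w"
proof (rule ccontr)
  assume ne: "z \<noteq> w"
  have "(z - w)*(z^2+z*w+w^2 - 3) = (z^3 - 3*z + 3*c) - (w^3 - 3*w + 3*c)"
    by (simp add: algebra_simps power2_eq_square power3_eq_cube)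
  also have "\<dots> = 0" using assms by simp
  finally have e: "z^2+z*w+w^2 = 3" using ne by simp
  define t where "t = -(z+w)"
  have t1: "z + t + w = 0" unfolding t_def by simp
  have t2: "z * t + z * w + t * w = -3"
  proof -
    have "z * t + z * w + t * w = -(z^2+z*w+w^2)" unfolding t_def by (simp add: algebra_simps power2_eq_square)
    thus ?thesis using e by simp
  qed
  have rt: "t^3 - 3*t + 3*c = 0" by (rule vieta_roots[OF t1 t2 assms(2)])
  have m: "z \<in> O1 \<union> O2 \<union> O3" "t \<in> O1 \<union> O2 \<union> O3" "w \<in> O1 \<union> O2 \<union> O3"
    using root_region[OF assms(1)] assms(2,3) rt by blast+
  have C: "(z \<in> O1 \<or> t \<in> O1 \<or> w \<in> O1) \<and> (z \<in> O2 \<or> t \<in> O2 \<or> w \<in> O2) \<and>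
         (z \<in> O3 \<or> t \<in> O3 \<or> w \<in> O3)" by (rule core[OF t1 t2 m])
  have D: "\<And>z. z \<in> O1 \<Longrightarrow> z \<notin> O2" "\<And>z. z \<in> O1 \<Longrightarrow> z \<notin> O3" "\<And>z. z \<in> O2 \<Longrightarrow> z \<notin> O3"
    using O_disj by blast+
  from Q show False
  proof (elim disjE)
    assume "Q = O1"
    hence "z \<notin> O2" "w \<notin> O2" "z \<notin> O3" "w \<notin> O3" using D \<open>z \<in> Q\<close> \<open>w \<in> Q\<close> by auto
    hence "t \<in> O2" "t \<in> O3" using C by auto
    thus False using D by auto
  next
    assume "Q = O2"
    hence "z \<notin> O1" "w \<notin> O1" "z \<notin> O3" "w \<notin> O3" using D \<open>z \<in> Q\<close> \<open>w \<in> Q\<close> by auto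
    hence "t \<in> O1" "t \<in> O3" using C by auto
    thus False using D by auto
  next
    assume "Q = O3"
    hence "z \<notin> O2" "w \<notin> O2" "z \<notin> O1" "w \<notin> O1" using D \<open>z \<in> Q\<close> \<open>w \<in> Q\<close> by auto
    hence "t \<in> O2" "t \<in> O1" using C by auto
    thus False using D by auto
  qed
qed

definition F :: "complex \<Rightarrow> complex" where "F u = -(u^3/3 + u^2)"

lemma P_shift: "(u+1)^3 - 3*(u+1) + 3*(s+2/3) = 3 * P s u"
  by (simp add: P_def algebra_simps power3_eq_cube power2_eq_square)

lemma P_F: "P s u = 0 \<longleftrightarrow> F u = s"
  unfolding P_def F_def add_eq_0_iff by auto

lemma F_UHP:
  assumes "u + 1 \<in> O1 \<union> O2 \<union> O3"
  shows "Im (F u) > 0"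
proof -
  define z where "z = u + 1"
  have u: "u = z - 1" unfolding z_def by simp
  have "Im (F u) = - Im z * ((Re z)^2 - (Im z)^2/3 - 1)"
    unfolding u F_def by (simp add: Im_cube power3_eq_cube power2_eq_square field_simps)
  moreover have "z \<in> O1 \<union> O2 \<union> O3" using assms z_def by simp
  ultimately show ?thesis
    by (auto simp: O1_def O2_def O3_def mult_less_0_iff zero_less_mult_iff)
qed

lemma uniq_u:
  assumes "s \<in> UHP" "P s u = 0" "P s v = 0"
    and Q: "Q = O1 \<or> Q = O2 \<or> Q = O3" and "u + 1 \<in> Q" "v + 1 \<in> Q"
  shows "u = v"
proof -
  have "Im (s + 2/3) > 0" using assms(1) by (simp add: UHP_def)
  moreover have "(u+1)^3 - 3*(u+1) + 3*(s+2/3) = 0" "(v+1)^3 - 3*(v+1) + 3*(s+2/3) = 0"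
    using assms(2,3) P_shift by simp_all
  ultimately have "u + 1 = v + 1" by (rule uniq_z[OF _ _ _ Q assms(5,6)])
  thus ?thesis by simp
qed

lemma root_fun:
  assumes Q: "Q = O1 \<or> Q = O2 \<or> Q = O3"
  shows "\<exists>r. r holomorphic_on UHP \<and> (\<forall>s\<in>UHP. r s + 1 \<in> Q \<and> P s (r s) = 0)"
proof -
  define S where "S = (\<lambda>u. u + 1) -` Q"
  have QU: "Q \<subseteq> O1 \<union> O2 \<union> O3" using Q by blast
  have "open Q" using Q open_O by blast
  hence oS: "open S" unfolding S_def by (rule continuous_open_vimage) (intro continuous_intros)
  have hol: "F holomorphic_on S" unfolding F_def by (intro holomorphic_intros) simp
  have FU: "F u \<in> UHP" if "u \<in> S" for u
  proof -
    have "u + 1 \<in> O1 \<union> O2 \<union> O3" using that QU unfolding S_def by auto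
    hence "Im (F u) > 0" by (rule F_UHP)
    thus ?thesis by (simp add: UHP_def)
  qed
  have inj: "inj_on F S"
  proof (rule inj_onI)
    fix u v assume uv: "u \<in> S" "v \<in> S" "F u = F v"
    have "F u \<in> UHP" using FU uv(1) .
    moreover have "P (F u) u = 0" "P (F u) v = 0" unfolding P_F using uv(3) by simp_all
    moreover have "u + 1 \<in> Q" "v + 1 \<in> Q" using uv unfolding S_def by auto
    ultimately show "u = v" by (rule uniq_u[OF _ _ _ Q])
  qed
  have img: "F ` S = UHP"
  proof
    show "F ` S \<subseteq> UHP" using FU by (rule image_subsetI)
    show "UHP \<subseteq> F ` S"
    proof
      fix s assume s: "s \<in> UHP"
      hence c: "Im (s + 2/3) > 0" by (simp add: UHP_def)
      have "\<exists>z\<in>Q. z^3 - 3*z + 3*(s+2/3) = 0"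
        using all_regions[OF c] Q by (elim disjE) simp_all
      then obtain z where z: "z \<in> Q" "z^3 - 3*z + 3*(s+2/3) = 0" by blast
      have "3 * P s (z - 1) = 0" using z(2) P_shift[of "z-1" s] by simp
      hence "F (z - 1) = s" using P_F by simp
      moreover have "z - 1 \<in> S" using z(1) unfolding S_def by simp
      ultimately show "s \<in> F ` S" by (metis image_eqI)
    qed
  qed
  obtain g where g: "g holomorphic_on (F ` S)" "\<And>z. z \<in> S \<Longrightarrow> g (F z) = z"
    using holomorphic_has_inverse[OF hol oS inj] by blast
  show ?thesis
  proof (intro exI conjI ballI)
    show "g holomorphic_on UHP" using g(1) img by simp
  next
    fix s assume "s \<in> UHP"
    then obtain u where u: "u \<in> S" "s = F u" using img by blast
    hence gs: "g s = u" using g(2) by simp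
    show "g s + 1 \<in> Q" using u(1) gs unfolding S_def by simp
    show "P s (g s) = 0" using u(2) gs P_F by simp
  qed
qed

definition good :: "(complex \<Rightarrow> complex) \<Rightarrow> (complex \<Rightarrow> complex) \<Rightarrow> (complex \<Rightarrow> complex) \<Rightarrow> bool" where
  "good r1 r2 r3 \<longleftrightarrow> (\<forall>s\<in>UHP. r1 s + 1 \<in> O1 \<and> P s (r1 s) = 0 \<and> r2 s + 1 \<in> O2 \<and> P s (r2 s) = 0 \<and>
      r3 s + 1 \<in> O3 \<and> P s (r3 s) = 0)"

lemma sq_gt1_neg: "(a::real) < 0 \<Longrightarrow> a^2 > 1 \<Longrightarrow> a < -1"
proof (rule ccontr)
  assume "a < 0" "a^2 > 1" "\<not> a < -1"
  hence "(-a)^2 \<le> 1" by (intro power_le_one) auto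
  thus False using \<open>a^2 > 1\<close> by simp
qed

lemma sq_gt1_pos: "(a::real) > 0 \<Longrightarrow> a^2 > 1 \<Longrightarrow> a > 1"
proof (rule ccontr)
  assume "a > 0" "a^2 > 1" "\<not> a > 1"
  hence "a^2 \<le> 1" by (intro power_le_one) auto
  thus False using \<open>a^2 > 1\<close> by simp
qed

lemma O2_right:
  fixes x y :: real
  assumes "y > 0" "x^2 - y^2/3 < 1"
  shows "x - 1 < 2*y/3"
proof (rule ccontr)
  assume "\<not> ?thesis"
  hence h: "2*y/3 \<le> x - 1" by simp
  hence x1: "x > 1" using assms(1) by simp
  have "(2*y/3)^2 \<le> (x-1)^2" using h assms(1) by (intro power_mono) auto
  moreover have "(x+7)*(x-1) > 0" using x1 by simp
  ultimately show False using assms(2) by (simp add: power2_eq_square algebra_simps)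
qed

lemma O2_left:
  fixes x y :: real
  assumes "y > 0" "x^2 - y^2/3 < 1"
  shows "-(x + 1) < 2*y/3"
  using O2_right[of y "-x"] assms by simp

lemma Arg_upper:
  assumes "0 < Im z"
  shows "Arg z = pi/2 - arctan(Re z / Im z)"
proof (rule Arg_unique [of "norm z"])
  show "(cmod z) * exp (\<i> * (pi / 2 - arctan (Re z / Im z))) = z"
    apply (rule complex_eqI)
    using assms norm_complex_def [of z, symmetric]
    unfolding exp_Euler cos_diff sin_diff sin_of_real cos_of_real
    by (simp_all add: field_simps real_sqrt_divide sin_arctan cos_arctan)
  show "0 < cmod z" using assms by auto
qed (use arctan [of "Re z / Im z"] in auto)

lemma arctan_23: "arctan (2/3) = pi/2 - arctan (3/2)"
  using arctan_inverse[of "3/2"] by simp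

lemma good_regions:
  assumes "good r1 r2 r3" "s \<in> UHP"
  shows "Im (r1 s) < 0 \<and> Re (r1 s) < -2 \<and>
       Im (r2 s) > 0 \<and> Arg (r2 s) > arctan (3/2) \<and> Arg (r2 s + 2) < pi - arctan (3/2) \<and>
       Im (r3 s) < 0 \<and> Re (r3 s) > 0"
proof -
  have m: "r1 s + 1 \<in> O1" "r2 s + 1 \<in> O2" "r3 s + 1 \<in> O3" using assms unfolding good_def by auto
  have 1: "Im (r1 s) < 0" "Re (r1 s) < -2"
  proof -
    show "Im (r1 s) < 0" using m(1) by (simp add: O1_def)
    have h: "Re (r1 s) + 1 < 0" "1 < (Re (r1 s) + 1)^2 - (Im (r1 s))^2/3"
      using m(1) by (auto simp: O1_def)
    have "(Re (r1 s) + 1)^2 > 1" using h(2) zero_le_power2[of "Im (r1 s)"] by linarith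
    note h = h(1) this
    thus "Re (r1 s) < -2" using sq_gt1_neg[OF h] by simp
  qed
  have 3: "Im (r3 s) < 0" "Re (r3 s) > 0"
  proof -
    show "Im (r3 s) < 0" using m(3) by (simp add: O3_def)
    have h: "Re (r3 s) + 1 > 0" "1 < (Re (r3 s) + 1)^2 - (Im (r3 s))^2/3"
      using m(3) by (auto simp: O3_def)
    have "(Re (r3 s) + 1)^2 > 1" using h(2) zero_le_power2[of "Im (r3 s)"] by linarith
    note h = h(1) this
    thus "Re (r3 s) > 0" using sq_gt1_pos[OF h] by simp
  qed
  define x where "x = Re (r2 s) + 1"
  define y where "y = Im (r2 s)"
  have xy: "y > 0" "x^2 - y^2/3 < 1" using m(2) by (auto simp: O2_def x_def y_def)
  have a1: "Arg (r2 s) > arctan (3/2)"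
  proof -
    have "Arg (r2 s) = pi/2 - arctan ((x - 1) / y)" using Arg_upper[of "r2 s"] xy by (simp add: x_def y_def)
    moreover have "(x - 1)/y < 2/3" using O2_right[OF xy] xy(1) by (simp add: pos_divide_less_eq)
    hence "arctan ((x - 1)/y) < arctan (2/3)" by (simp add: arctan_less_iff)
    ultimately show ?thesis using arctan_23 by simp
  qed
  have a2: "Arg (r2 s + 2) < pi - arctan (3/2)"
  proof -
    have "Arg (r2 s + 2) = pi/2 - arctan ((x + 1) / y)" using Arg_upper[of "r2 s + 2"] xy by (simp add: x_def y_def add_ac)
    moreover have "-(2/3) < (x + 1)/y" using O2_left[OF xy] xy(1) by (simp add: pos_less_divide_eq)
    hence "arctan (-(2/3)) < arctan ((x + 1)/y)" by (simp add: arctan_less_iff)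
    hence "- arctan (2/3) < arctan ((x + 1)/y)" by (simp add: arctan_minus)
    ultimately show ?thesis using arctan_23 by simp
  qed
  show ?thesis using 1 3 a1 a2 xy(1) by (simp add: y_def)
qed

lemma good_distinct:
  assumes "good r1 r2 r3" "s \<in> UHP"
  shows "r1 s \<noteq> r2 s" "r1 s \<noteq> r3 s" "r2 s \<noteq> r3 s"
proof -
  have m: "r1 s + 1 \<in> O1" "r2 s + 1 \<in> O2" "r3 s + 1 \<in> O3" using assms unfolding good_def by auto
  show "r1 s \<noteq> r2 s" "r1 s \<noteq> r3 s" "r2 s \<noteq> r3 s" using m O_disj by auto
qed

lemma factor3:
  fixes a b c s u :: complex
  assumes "P s a = 0" "P s b = 0" "P s c = 0" "a \<noteq> b" "a \<noteq> c" "b \<noteq> c"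
  shows "3 * P s u = (u - a) * (u - b) * (u - c)"
proof -
  have pa: "a^3 + 3*a^2 + 3* s = 0" using assms(1) unfolding P_def by (simp add: field_simps)
  have pb: "b^3 + 3*b^2 + 3* s = 0" using assms(2) unfolding P_def by (simp add: field_simps)
  have pc: "c^3 + 3*c^2 + 3* s = 0" using assms(3) unfolding P_def by (simp add: field_simps)
  have "(a - b) * (a^2 + a*b + b^2 + 3*a + 3*b) = (a^3 + 3*a^2 + 3* s) - (b^3 + 3*b^2 + 3* s)"
    by (simp add: algebra_simps power2_eq_square power3_eq_cube)
  hence eab: "a^2 + a*b + b^2 + 3*a + 3*b = 0" using pa pb assms(4) by simp
  have "(a - c) * (a^2 + a*c + c^2 + 3*a + 3*c) = (a^3 + 3*a^2 + 3* s) - (c^3 + 3*c^2 + 3* s)"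
    by (simp add: algebra_simps power2_eq_square power3_eq_cube)
  hence eac: "a^2 + a*c + c^2 + 3*a + 3*c = 0" using pa pc assms(5) by simp
  have "(b - c) * (a + b + c + 3) = (a^2 + a*b + b^2 + 3*a + 3*b) - (a^2 + a*c + c^2 + 3*a + 3*c)"
    by (simp add: algebra_simps power2_eq_square)
  hence e1: "a + b + c = -3" using eab eac assms(6) by (simp add: add_eq_0_iff2)
  have "a*b + a*c + b*c = -(a^2 + a*b + b^2 + 3*a + 3*b) + (a + b)*(a + b + c + 3)"
    by (simp add: algebra_simps power2_eq_square)
  hence e2: "a*b + a*c + b*c = 0" using eab e1 by simp
  have "a^3 + 3*a^2 - a*b*c = a^3 - (a+b+c)*a^2 + (a*b+a*c+b*c)*a - a*b*c" using e1 e2 by simp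
  also have "\<dots> = 0" by (simp add: algebra_simps power2_eq_square power3_eq_cube)
  finally have e3: "a*b*c = -3* s" using pa by (simp add: algebra_simps add_eq_0_iff2)
  have "(u - a) * (u - b) * (u - c) = u^3 - (a+b+c)*u^2 + (a*b+a*c+b*c)*u - a*b*c"
    by (simp add: algebra_simps power2_eq_square power3_eq_cube)
  also have "\<dots> = u^3 + 3*u^2 + 3* s" unfolding e1 e2 e3 by simp
  also have "\<dots> = 3 * P s u" unfolding P_def by (simp add: field_simps)
  finally show ?thesis by simp
qed

lemma good_factor:
  assumes "good r1 r2 r3" "s \<in> UHP"
  shows "3 * P s u = (u - r1 s) * (u - r2 s) * (u - r3 s)"
proof -
  have "P s (r1 s) = 0" "P s (r2 s) = 0" "P s (r3 s) = 0" using assms unfolding good_def by auto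
  thus ?thesis using factor3 good_distinct[OF assms] by blast
qed

lemma good_norm:
  assumes "good r1 r2 r3" "s \<in> UHP"
  shows "cmod (3 * P s u) = cmod (u - r1 s) * cmod (u - r2 s) * cmod (u - r3 s)"
  unfolding good_factor[OF assms] by (simp add: norm_mult)

lemma key_bound:
  fixes X Y t :: real
  assumes "X * Y = t^3" "X > t" "t > 0" "Y \<ge> 0"
  shows "Y < t^2"
proof (rule ccontr)
  assume "\<not> Y < t^2"
  hence "Y \<ge> t^2" by simp
  hence "X * Y \<ge> X * t^2" using assms by (intro mult_left_mono) auto
  moreover have "X * t^2 > t * t^2" using assms by (intro mult_strict_right_mono) auto
  ultimately show False using assms(1) by (simp add: power3_eq_cube power2_eq_square)
qed

lemma key_bound2:
  fixes X Y W m :: real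
  assumes "X * Y = W" "W < m" "X \<ge> 1" "Y \<ge> 0"
  shows "Y < m"
proof (rule ccontr)
  assume "\<not> Y < m"
  moreover have "X * Y \<ge> 1 * Y" using assms by (intro mult_right_mono) auto
  ultimately show False using assms by simp
qed

lemma csqrt_UHP:
  assumes "Im s > 0"
  shows "Re (csqrt s) > 0" "Im (csqrt s) > 0"
proof -
  have "Im s = Im ((csqrt s)^2)" by simp
  also have "\<dots> = 2 * Re (csqrt s) * Im (csqrt s)" by (simp add: power2_eq_square)
  finally have h: "2 * Re (csqrt s) * Im (csqrt s) > 0" using assms by simp
  have "Re (csqrt s) \<ge> 0" by (rule Re_csqrt)
  thus "Re (csqrt s) > 0" "Im (csqrt s) > 0" using h by (auto simp: zero_less_mult_iff)
qed

lemma part_i: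
  assumes g: "good r1 r2 r3" and s: "s \<in> UHP" and small: "cmod s < 1"
  shows "cmod (r2 s - \<i> * csqrt s) < cmod s" "cmod (r3 s + \<i> * csqrt s) < cmod s"
    "cmod (r1 s + 3 + s / 3) < (cmod s) ^ 2"
proof -
  have Ims: "Im s > 0" using s by (simp add: UHP_def)
  define q where "q = csqrt s"
  define t where "t = cmod q"
  have q2: "q^2 = s" unfolding q_def by simp
  have pq: "Re q > 0" "Im q > 0" using csqrt_UHP[OF Ims] unfolding q_def by auto
  have t2: "t^2 = cmod s" unfolding t_def q_def by simp
  have tpos: "t > 0" using pq unfolding t_def by auto
  have t1: "t < 1"
  proof -
    have "t^2 < 1" using t2 small by simp
    thus ?thesis using tpos by (simp add: power_less_one_iff)
  qed
  have Imq: "Im q \<le> t" "Re q \<le> t" using abs_Im_le_cmod[of q] abs_Re_le_cmod[of q] unfolding t_def by auto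
  have reg: "Im (r1 s) < 0" "Re (r1 s) < -2" "Im (r2 s) > 0" "Im (r3 s) < 0" "Re (r3 s) > 0"
    using good_regions[OF g s] by auto
  define a where "a = \<i> * q"
  have Rea: "Re a = - Im q" "Im a = Re q" unfolding a_def by simp_all
  have Pa: "3 * P s a = a^3"
  proof -
    have "a^2 = - s" unfolding a_def using q2 by (simp add: power_mult_distrib)
    thus ?thesis unfolding P_def by (simp add: field_simps power3_eq_cube power2_eq_square)
  qed
  have na: "cmod a = t" unfolding a_def t_def by (simp add: norm_mult)
  have prodA: "cmod (a - r1 s) * cmod (a - r2 s) * cmod (a - r3 s) = t^3"
    using good_norm[OF g s, of a] Pa na by (simp add: norm_power)
  have A1: "cmod (a - r1 s) > 1"
  proof -
    have "Re (a - r1 s) > 2 - t" using Rea reg Imq by simp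
    moreover have "Re (a - r1 s) \<le> cmod (a - r1 s)" by (rule complex_Re_le_cmod)
    ultimately show ?thesis using t1 by simp
  qed
  have C1: "cmod (a - r3 s) > t"
  proof -
    have "(Im q)^2 < (Re (a - r3 s))^2"
    proof -
      have "Im q < - Re (a - r3 s)" using Rea reg by simp
      hence "(Im q)^2 < (- Re (a - r3 s))^2" using pq by (intro power_strict_mono) auto
      thus ?thesis by (simp add: power2_commute)
    qed
    moreover have "(Re q)^2 < (Im (a - r3 s))^2"
      using Rea reg pq by (intro power_strict_mono) auto
    ultimately have "t^2 < (cmod (a - r3 s))^2"
      unfolding t_def cmod_power2 by simp
    thus ?thesis by (rule power_less_imp_less_base) simp
  qed
  have AC: "cmod (a - r1 s) * cmod (a - r3 s) > t"
  proof -
    have "1 * t < cmod (a - r1 s) * cmod (a - r3 s)"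
      using A1 C1 tpos by (intro mult_strict_mono) auto
    thus ?thesis by simp
  qed
  have B: "cmod (a - r2 s) < t^2"
    by (rule key_bound[of "cmod (a - r1 s) * cmod (a - r3 s)" _ t]) (use prodA AC tpos in \<open>simp_all add: algebra_simps\<close>)
  show r2b: "cmod (r2 s - \<i> * csqrt s) < cmod s"
    using B t2 by (simp add: a_def q_def norm_minus_commute)
  define b where "b = - a"
  have Pb: "3 * P s b = b^3"
  proof -
    have "b^2 = - s" unfolding b_def a_def using q2 by (simp add: power_mult_distrib)
    thus ?thesis unfolding P_def by (simp add: field_simps power3_eq_cube power2_eq_square)
  qed
  have nb: "cmod b = t" unfolding b_def using na by simp
  have prodB: "cmod (b - r1 s) * cmod (b - r2 s) * cmod (b - r3 s) = t^3"
    using good_norm[OF g s, of b] Pb nb by (simp add: norm_power)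
  have A2: "cmod (b - r1 s) > 2"
  proof -
    have "Re (b - r1 s) > 2" using Rea reg pq unfolding b_def by simp
    moreover have "Re (b - r1 s) \<le> cmod (b - r1 s)" by (rule complex_Re_le_cmod)
    ultimately show ?thesis by simp
  qed
  have B2: "cmod (b - r2 s) > t"
  proof -
    have "b - r2 s = - (2 * a) + (a - r2 s)" unfolding b_def by simp
    hence "cmod (b - r2 s) \<ge> cmod (2 * a) - cmod (a - r2 s)"
      by (metis norm_diff_ineq norm_minus_cancel)
    moreover have "cmod (2 * a) = 2 * t" using na by (simp add: norm_mult)
    moreover have "t^2 < t" using t1 tpos by (simp add: power2_eq_square)
    ultimately show ?thesis using B by simp
  qed
  have AB: "cmod (b - r1 s) * cmod (b - r2 s) > t"
  proof -
    have "1 * t < cmod (b - r1 s) * cmod (b - r2 s)"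
      using A2 B2 tpos by (intro mult_strict_mono) auto
    thus ?thesis by simp
  qed
  have C: "cmod (b - r3 s) < t^2"
    by (rule key_bound[of "cmod (b - r1 s) * cmod (b - r2 s)" _ t]) (use prodB AB tpos in \<open>simp_all add: algebra_simps\<close>)
  show "cmod (r3 s + \<i> * csqrt s) < cmod s"
  proof -
    have "r3 s + \<i> * csqrt s = - (b - r3 s)" unfolding b_def a_def q_def by simp
    thus ?thesis using C t2 by (simp add: norm_minus_commute)
  qed
  define c where "c = -3 - s/3"
  have Pc: "3 * P s c = - (s^2 * (2/3 + s/27))"
    unfolding P_def c_def by (simp add: field_simps power3_eq_cube power2_eq_square)
  have ns: "cmod s = t^2" using t2 by simp
  have W: "cmod (3 * P s c) < (cmod s)^2"
  proof -
    have "cmod (2/3 + s/27) \<le> 2/3 + cmod s / 27"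
      using norm_triangle_ineq[of "2/3" "s/27"] by (simp add: norm_divide)
    also have "\<dots> < 1" using small by simp
    finally have "cmod (2/3 + s/27) < 1" .
    moreover have "cmod s > 0" using tpos ns by simp
    ultimately have "(cmod s)^2 * cmod (2/3 + s/27) < (cmod s)^2 * 1"
      by (intro mult_strict_left_mono) auto
    thus ?thesis unfolding Pc by (simp add: norm_mult norm_power)
  qed
  have Resge: "Re s \<ge> -1" using abs_Re_le_cmod[of s] small by simp
  have Rer2: "Re (r2 s) > -2"
  proof -
    have "Re (r2 s) = Re a - Re (a - r2 s)" by simp
    moreover have "Re (a - r2 s) \<le> cmod (a - r2 s)" by (rule complex_Re_le_cmod)
    moreover have "t^2 < 1" using t1 tpos by (simp add: power_less_one_iff)
    ultimately show ?thesis using Rea Imq B t1 by simp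
  qed
  have B3: "cmod (c - r2 s) \<ge> 2/3"
  proof -
    have "Re (r2 s - c) \<ge> 2/3" using Rer2 Resge unfolding c_def by simp
    moreover have "Re (r2 s - c) \<le> cmod (r2 s - c)" by (rule complex_Re_le_cmod)
    ultimately show ?thesis by (simp add: norm_minus_commute)
  qed
  have C3: "cmod (c - r3 s) \<ge> 8/3"
  proof -
    have "Re (r3 s - c) \<ge> 8/3" using reg Resge unfolding c_def by simp
    moreover have "Re (r3 s - c) \<le> cmod (r3 s - c)" by (rule complex_Re_le_cmod)
    ultimately show ?thesis by (simp add: norm_minus_commute)
  qed
  have BC: "cmod (c - r2 s) * cmod (c - r3 s) \<ge> 1"
  proof -
    have "(2/3) * (8/3) \<le> cmod (c - r2 s) * cmod (c - r3 s)"
      using B3 C3 by (intro mult_mono) auto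
    thus ?thesis by simp
  qed
  have "cmod (c - r1 s) < (cmod s)^2"
    by (rule key_bound2[of "cmod (c - r2 s) * cmod (c - r3 s)" _ "cmod (3 * P s c)"])
       (use good_norm[OF g s, of c] W BC in \<open>simp_all add: algebra_simps\<close>)
  thus "cmod (r1 s + 3 + s / 3) < (cmod s) ^ 2"
  proof -
    have "r1 s + 3 + s / 3 = - (c - r1 s)" unfolding c_def by simp
    hence "cmod (r1 s + 3 + s / 3) = cmod (c - r1 s)" by (simp only: norm_minus_cancel)
    thus ?thesis using \<open>cmod (c - r1 s) < (cmod s)^2\<close> by simp
  qed
qed

lemma part_iv:
  assumes "P s u = 0" "cmod s < 21/4"
  shows "cmod u < 399/100"
proof (rule ccontr)
  assume "\<not> ?thesis"
  hence R: "cmod u \<ge> 399/100" by simp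
  have "u^2 * (u/3 + 1) + s = P s u" unfolding P_def
    by (simp add: field_simps power3_eq_cube power2_eq_square)
  hence "u^2 * (u/3 + 1) + s = 0" using assms(1) by simp
  hence "u^2 * (u/3 + 1) = - s" by (simp only: add_eq_0_iff2)
  hence eq: "(cmod u)^2 * cmod (u/3 + 1) = cmod s"
    by (metis norm_minus_cancel norm_mult norm_power)
  have "cmod (u/3) - cmod (-1::complex) \<le> cmod (u/3 - (-1))" by (rule norm_triangle_ineq2)
  hence "cmod (u/3 + 1) \<ge> cmod u / 3 - 1" by (simp add: norm_divide)
  hence h1: "cmod (u/3 + 1) \<ge> 33/100" using R by simp
  have h2: "(cmod u)^2 \<ge> (399/100)^2" using R by (intro power_mono) auto
  have "(399/100)^2 * (33/100) \<le> (cmod u)^2 * cmod (u/3 + 1)"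
    using h1 h2 by (intro mult_mono) auto
  thus False using eq assms(2) by (simp add: power2_eq_square)
qed

lemma P_sym: "P (- cnj s - 4/3) (-2 - cnj w) = - cnj (P s w)"
  unfolding P_def by (simp add: field_simps power2_eq_square power3_eq_cube)

lemma sym_regions:
  "w + 1 \<in> O3 \<Longrightarrow> (-2 - cnj w) + 1 \<in> O1"
  "w + 1 \<in> O2 \<Longrightarrow> (-2 - cnj w) + 1 \<in> O2"
  "w + 1 \<in> O1 \<Longrightarrow> (-2 - cnj w) + 1 \<in> O3"
  by (auto simp: O1_def O2_def O3_def power2_eq_square algebra_simps)

lemma good_sym:
  assumes g: "good r1 r2 r3" and s: "s \<in> UHP"
  shows "r1 (- cnj s - 4/3) = -2 - cnj (r3 s)" "r2 (- cnj s - 4/3) = -2 - cnj (r2 s)"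
    "r3 (- cnj s - 4/3) = -2 - cnj (r1 s)"
proof -
  define s' where "s' = - cnj s - 4/3"
  have s': "s' \<in> UHP" using s unfolding s'_def UHP_def by simp
  have m: "r1 s + 1 \<in> O1" "r2 s + 1 \<in> O2" "r3 s + 1 \<in> O3"
    "P s (r1 s) = 0" "P s (r2 s) = 0" "P s (r3 s) = 0" using g s unfolding good_def by auto
  have m': "r1 s' + 1 \<in> O1" "r2 s' + 1 \<in> O2" "r3 s' + 1 \<in> O3"
    "P s' (r1 s') = 0" "P s' (r2 s') = 0" "P s' (r3 s') = 0" using g s' unfolding good_def by auto
  have p: "P s' (-2 - cnj w) = 0" if "P s w = 0" for w
    unfolding s'_def P_sym using that by simp
  show "r1 s' = -2 - cnj (r3 s)"
    by (rule uniq_u[OF s' m'(4) p[OF m(6)] _ m'(1) sym_regions(1)[OF m(3)]]) simp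
  show "r2 s' = -2 - cnj (r2 s)"
    by (rule uniq_u[OF s' m'(5) p[OF m(5)] _ m'(2) sym_regions(2)[OF m(2)]]) simp
  show "r3 s' = -2 - cnj (r1 s)"
    by (rule uniq_u[OF s' m'(6) p[OF m(4)] _ m'(3) sym_regions(3)[OF m(1)]]) simp
qed

lemma csqrt_negcnj:
  assumes "Im z > 0"
  shows "csqrt (- cnj z) = \<i> * cnj (csqrt z)"
proof -
  have "(\<i> * cnj (csqrt z))^2 = - cnj z"
    by (simp add: power_mult_distrib flip: complex_cnj_power)
  moreover have "Re (\<i> * cnj (csqrt z)) > 0" using csqrt_UHP[OF assms] by simp
  ultimately show ?thesis using csqrt_square[of "\<i> * cnj (csqrt z)"] by simp
qed

lemma sqrt23: "sqrt (2/3) < (1::real)"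
  by (simp add: real_sqrt_less_iff)

lemma part_ii:
  assumes g: "good r1 r2 r3" and sig: "s' + 4/3 \<in> Dplus (sqrt (2/3))"
  shows "cmod (2 + r1 s' + csqrt (s' + 4/3)) < cmod (s' + 4/3)"
    "cmod (2 + r2 s' - csqrt (s' + 4/3)) < cmod (s' + 4/3)"
    "cmod (r3 s' - 1 + (s' + 4/3) / 3) < (cmod (s' + 4/3))^2"
proof -
  define \<sigma> where "\<sigma> = s' + 4/3"
  define s where "s = - cnj \<sigma>"
  have Isig: "Im \<sigma> > 0" "cmod \<sigma> < sqrt (2/3)" using sig unfolding \<sigma>_def Dplus_def by auto
  have s: "s \<in> UHP" using Isig unfolding s_def UHP_def by simp
  have ns: "cmod s = cmod \<sigma>" unfolding s_def by simp
  have small: "cmod s < 1" using ns Isig(2) sqrt23 by linarith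
  have ss': "- cnj s - 4/3 = s'" unfolding s_def \<sigma>_def by simp
  note sy = good_sym[OF g s, unfolded ss']
  note I = part_i[OF g s small]
  have cs: "csqrt s = \<i> * cnj (csqrt \<sigma>)" unfolding s_def by (rule csqrt_negcnj[OF Isig(1)])
  have cs': "csqrt \<sigma> = \<i> * cnj (csqrt s)" unfolding cs by simp
  have e1: "2 + r1 s' + csqrt \<sigma> = - cnj (r3 s + \<i> * csqrt s)" unfolding sy cs' by simp
  have e2: "2 + r2 s' - csqrt \<sigma> = - cnj (r2 s - \<i> * csqrt s)" unfolding sy cs' by simp
  have e3: "r3 s' - 1 + \<sigma> / 3 = - cnj (r1 s + 3 + s / 3)" unfolding sy s_def by simp
  have n1: "cmod (2 + r1 s' + csqrt \<sigma>) = cmod (r3 s + \<i> * csqrt s)"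
    unfolding e1 by (simp only: norm_minus_cancel complex_mod_cnj)
  have n2: "cmod (2 + r2 s' - csqrt \<sigma>) = cmod (r2 s - \<i> * csqrt s)"
    unfolding e2 by (simp only: norm_minus_cancel complex_mod_cnj)
  have n3: "cmod (r3 s' - 1 + \<sigma> / 3) = cmod (r1 s + 3 + s / 3)"
    unfolding e3 by (simp only: norm_minus_cancel complex_mod_cnj)
  have "cmod (2 + r1 s' + csqrt \<sigma>) < cmod \<sigma>" using I(2) n1 ns by simp
  thus "cmod (2 + r1 s' + csqrt (s' + 4/3)) < cmod (s' + 4/3)" unfolding \<sigma>_def .
  have "cmod (2 + r2 s' - csqrt \<sigma>) < cmod \<sigma>" using I(1) n2 ns by simp
  thus "cmod (2 + r2 s' - csqrt (s' + 4/3)) < cmod (s' + 4/3)" unfolding \<sigma>_def .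
  have "cmod (r3 s' - 1 + \<sigma> / 3) < (cmod \<sigma>)^2" using I(3) n3 ns by simp
  thus "cmod (r3 s' - 1 + (s' + 4/3) / 3) < (cmod (s' + 4/3))^2" unfolding \<sigma>_def .
qed

lemma sign_const:
  fixes f :: "real \<Rightarrow> real"
  assumes "continuous_on {0<..1} f" "\<forall>t\<in>{0<..1}. f t \<noteq> 0" "f 1 > 0" "t \<in> {0<..1}"
  shows "f t > 0"
proof (rule ccontr)
  assume "\<not> f t > 0"
  hence ft: "f t \<le> 0" by simp
  have "{t..1} \<subseteq> {0<..1}" using assms(4) by auto
  hence c: "continuous_on {t..1} f" using assms(1) continuous_on_subset by blast
  obtain x where x: "t \<le> x" "x \<le> 1" "f x = 0" using IVT'[of f t 0 1] ft assms(3,4) c by auto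
  thus False using assms(2,4) by auto
qed

lemma Pt_scale: "P (s * of_real (t^2)) (of_real t * x) = of_real (t^2) * Pt t s x"
  unfolding P_def Pt_def by (simp add: field_simps power2_eq_square power3_eq_cube)

lemma roots_are:
  assumes "good r1 r2 r3" "s \<in> UHP" "P s u = 0"
  shows "u = r1 s \<or> u = r2 s \<or> u = r3 s"
proof -
  have "(u - r1 s) * (u - r2 s) * (u - r3 s) = 0" using good_factor[OF assms(1,2), of u] assms(3) by simp
  thus ?thesis by auto
qed

lemma labeling_eq:
  assumes g: "good r1 r2 r3" and s: "s \<in> UHP"
    and L: "root_labeling s R1 R2 R3 (r1 s) (r2 s) (r3 s)"
    and t: "t \<in> {0<..1}"
  shows "of_real t * R1 t = r1 (s * of_real (t^2))" "of_real t * R2 t = r2 (s * of_real (t^2))"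
    "of_real t * R3 t = r3 (s * of_real (t^2))"
proof -
  have LL: "\<forall>t\<in>{0<..1}. Pt t s (R1 t) = 0 \<and> Pt t s (R2 t) = 0 \<and> Pt t s (R3 t) = 0"
    "continuous_on {0<..1} R1" "continuous_on {0<..1} R2" "continuous_on {0<..1} R3"
    "R1 1 = r1 s" "R2 1 = r2 s" "R3 1 = r3 s"
    using L unfolding root_labeling_def by auto
  have SU: "s * of_real (x^2) \<in> UHP" if "x \<in> {0<..1}" for x
    using s that unfolding UHP_def by simp
  have reg: "Im (r1 w) < 0" "Re (r1 w) + 1 < 0" "Im (r2 w) > 0" "Im (r3 w) < 0" "Re (r3 w) + 1 > 0"
    if "w \<in> UHP" for w
    using good_regions[OF g that] by auto
  have isroot: "of_real x * R x = r1 (s * of_real (x^2)) \<or> of_real x * R x = r2 (s * of_real (x^2))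
      \<or> of_real x * R x = r3 (s * of_real (x^2))"
    if "x \<in> {0<..1}" "Pt x s (R x) = 0" for x R
  proof -
    have "P (s * of_real (x^2)) (of_real x * R x) = 0" using Pt_scale that(2) by simp
    thus ?thesis using roots_are[OF g SU[OF that(1)]] by blast
  qed
  have Imne: "Im (of_real x * R x) \<noteq> 0" if "x \<in> {0<..1}" "Pt x s (R x) = 0" for x R
    using isroot[of x R, OF that] reg[OF SU[OF that(1)]] by (metis less_irrefl)
  have contIm: "continuous_on {0<..1} (\<lambda>x. Im (of_real x * R x))" if "continuous_on {0<..1} R" for R
    using that by (intro continuous_intros) auto
  have contRe: "continuous_on {0<..1} (\<lambda>x. Re (of_real x * R x) + 1)" if "continuous_on {0<..1} R" for R
    using that by (intro continuous_intros) auto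
  have "Im (of_real t * R2 t) > 0"
    by (rule sign_const[OF contIm[OF LL(3)] _ _ t]) (use Imne LL(1) LL(6) reg[OF s] in auto)
  moreover have "Pt t s (R2 t) = 0" using LL(1) t by auto
  ultimately show "of_real t * R2 t = r2 (s * of_real (t^2))"
    using isroot[of t R2, OF t] reg[OF SU[OF t]] by (smt (verit))
  have neg: "Im (of_real x * R x) < 0"
    if "x \<in> {0<..1}" "continuous_on {0<..1} R" "\<forall>x\<in>{0<..1}. Pt x s (R x) = 0" "Im (R 1) < 0" for x R
  proof -
    have "- Im (of_real x * R x) > 0"
      by (rule sign_const[of "\<lambda>x. - Im (of_real x * R x)", OF _ _ _ that(1)])
         (use Imne that contIm[OF that(2)] in \<open>auto intro: continuous_on_minus\<close>)
    thus ?thesis by simp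
  qed
  have in13: "of_real x * R x = r1 (s * of_real (x^2)) \<or> of_real x * R x = r3 (s * of_real (x^2))"
    if "x \<in> {0<..1}" "continuous_on {0<..1} R" "\<forall>x\<in>{0<..1}. Pt x s (R x) = 0" "Im (R 1) < 0" for x R
  proof -
    have "Pt x s (R x) = 0" using that(1,3) by auto
    thus ?thesis using isroot[of x R, OF that(1)] neg[OF that] reg[OF SU[OF that(1)]] by (smt (verit))
  qed
  have Rene: "Re (of_real x * R x) + 1 \<noteq> 0"
    if "x \<in> {0<..1}" "continuous_on {0<..1} R" "\<forall>x\<in>{0<..1}. Pt x s (R x) = 0" "Im (R 1) < 0" for x R
    using in13[OF that] reg[OF SU[OF that(1)]] by (smt (verit))
  have P1: "\<forall>x\<in>{0<..1}. Pt x s (R1 x) = 0" "\<forall>x\<in>{0<..1}. Pt x s (R3 x) = 0" using LL(1) by auto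
  have I1: "Im (R1 1) < 0" "Im (R3 1) < 0" using LL(5,7) reg[OF s] by auto
  have "Re (of_real t * R3 t) + 1 > 0"
    by (rule sign_const[OF contRe[OF LL(4)] _ _ t]) (use Rene[OF _ LL(4) P1(2) I1(2)] LL(7) reg[OF s] in auto)
  thus "of_real t * R3 t = r3 (s * of_real (t^2))"
    using in13[OF t LL(4) P1(2) I1(2)] reg[OF SU[OF t]] by (smt (verit))
  have cR1: "continuous_on {0<..1} (\<lambda>x. - (Re (of_real x * R1 x) + 1))"
    using contRe[OF LL(2)] by (rule continuous_on_minus)
  have nz: "\<forall>x\<in>{0<..1}. - (Re (of_real x * R1 x) + 1) \<noteq> 0"
  proof
    fix x :: real assume x: "x \<in> {0<..1}"
    from Rene[of x R1, OF x LL(2) P1(1) I1(1)] show "- (Re (of_real x * R1 x) + 1) \<noteq> 0" by linarith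
  qed
  have one: "- (Re (of_real 1 * R1 1) + 1) > 0" using LL(5) reg[OF s] by simp
  have "- (Re (of_real t * R1 t) + 1) > 0"
    by (rule sign_const[of "\<lambda>x. - (Re (of_real x * R1 x) + 1)", OF cR1 nz one t])
  thus "of_real t * R1 t = r1 (s * of_real (t^2))"
    using in13[OF t LL(2) P1(1) I1(1)] reg[OF SU[OF t]] by (smt (verit))
qed

lemma analytic_from:
  assumes hol: "r holomorphic_on UHP" and s: "s \<in> UHP"
    and eq: "\<forall>t\<in>{0<..<1}. R t = r (s * of_real (t^2)) / of_real t"
  shows "real_analytic_on {0<..<1} R"
  unfolding real_analytic_on_def
proof
  fix t0 :: real assume t0: "t0 \<in> {0<..<1}"
  define W where "W = {w. 0 < Im (s * w^2)}"
  define Q where "Q = (\<lambda>w. r (s * w^2) / w)"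
  have oW: "open W" unfolding W_def by (intro open_Collect_less continuous_intros)
  have holQ: "Q holomorphic_on W"
  proof -
    have "(r \<circ> (\<lambda>w. s * w^2)) holomorphic_on W"
      by (rule holomorphic_on_compose_gen[OF _ hol]) (auto intro!: holomorphic_intros simp: W_def UHP_def)
    moreover have "\<And>w. w \<in> W \<Longrightarrow> w \<noteq> 0" unfolding W_def by auto
    ultimately show ?thesis unfolding Q_def o_def by (intro holomorphic_intros) auto
  qed
  have "complex_of_real t0 \<in> W" using s t0 unfolding W_def UHP_def by simp
  then obtain \<delta> where \<delta>: "\<delta> > 0" "ball (complex_of_real t0) \<delta> \<subseteq> W"
    using oW by (meson openE)
  have holB: "Q holomorphic_on ball (complex_of_real t0) \<delta>" using holQ \<delta>(2) by (rule holomorphic_on_subset)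
  show "\<exists>\<delta>>0. \<exists>c::nat \<Rightarrow> complex. \<forall>t\<in>{0<..<1}. \<bar>t - t0\<bar> < \<delta> \<longrightarrow> (\<lambda>n. c n * of_real ((t - t0) ^ n)) sums R t"
  proof (intro exI conjI ballI impI)
    show "\<delta> > 0" by (rule \<delta>(1))
  next
    fix t :: real assume t: "t \<in> {0<..<1}" "\<bar>t - t0\<bar> < \<delta>"
    have "complex_of_real t \<in> ball (complex_of_real t0) \<delta>"
      using t(2) by (simp add: dist_norm abs_minus_commute flip: of_real_diff)
    from holomorphic_power_series[OF holB this]
    have "(\<lambda>n. (deriv ^^ n) Q (complex_of_real t0) / fact n * (complex_of_real t - complex_of_real t0) ^ n)
          sums Q (complex_of_real t)" .
    moreover have "Q (complex_of_real t) = R t" using eq t(1) unfolding Q_def by simp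
    ultimately show "(\<lambda>n. (deriv ^^ n) Q (complex_of_real t0) / fact n * of_real ((t - t0) ^ n)) sums R t"
      by simp
  qed
qed

lemma part_iii:
  assumes g: "good r1 r2 r3" and hol: "r1 holomorphic_on UHP" "r2 holomorphic_on UHP" "r3 holomorphic_on UHP"
    and s: "s \<in> UHP" and L: "root_labeling s R1 R2 R3 (r1 s) (r2 s) (r3 s)"
  shows "real_analytic_on {0<..<1} R1" "real_analytic_on {0<..<1} R2" "real_analytic_on {0<..<1} R3"
proof -
  have e: "R1 t = r1 (s * of_real (t^2)) / of_real t" "R2 t = r2 (s * of_real (t^2)) / of_real t"
    "R3 t = r3 (s * of_real (t^2)) / of_real t" if "t \<in> {0<..<1}" for t
  proof -
    have t: "t \<in> {0<..1}" using that by auto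
    have tn: "complex_of_real t \<noteq> 0" using that by auto
    show "R1 t = r1 (s * of_real (t^2)) / of_real t" using labeling_eq(1)[OF g s L t] tn
      by (simp add: field_simps)
    show "R2 t = r2 (s * of_real (t^2)) / of_real t" using labeling_eq(2)[OF g s L t] tn
      by (simp add: field_simps)
    show "R3 t = r3 (s * of_real (t^2)) / of_real t" using labeling_eq(3)[OF g s L t] tn
      by (simp add: field_simps)
  qed
  show "real_analytic_on {0<..<1} R1" by (rule analytic_from[OF hol(1) s]) (use e in auto)
  show "real_analytic_on {0<..<1} R2" by (rule analytic_from[OF hol(2) s]) (use e in auto)
  show "real_analytic_on {0<..<1} R3" by (rule analytic_from[OF hol(3) s]) (use e in auto)
qed

theorem lemma1:
  shows "\<exists>r1 r2 r3 :: complex \<Rightarrow> complex.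
    r1 holomorphic_on UHP \<and> r2 holomorphic_on UHP \<and> r3 holomorphic_on UHP \<and>
    (\<forall>s\<in>UHP. P s (r1 s) = 0 \<and> P s (r2 s) = 0 \<and> P s (r3 s) = 0 \<and>
       r1 s \<noteq> r2 s \<and> r1 s \<noteq> r3 s \<and> r2 s \<noteq> r3 s) \<and>
    (\<forall>s\<in>UHP.
       Im (r1 s) < 0 \<and> Re (r1 s) < -2 \<and>
       Im (r2 s) > 0 \<and> Arg (r2 s) > arctan (3/2) \<and> Arg (r2 s + 2) < pi - arctan (3/2) \<and>
       Im (r3 s) < 0 \<and> Re (r3 s) > 0) \<and>
    (\<forall>s\<in>Dplus (sqrt (2/3)).
       cmod (r1 s + 3 + s / 3) < (cmod s) ^ 2 \<and>
       cmod (r2 s - \<i> * csqrt s) < cmod s \<and>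
       cmod (r3 s + \<i> * csqrt s) < cmod s) \<and>
    (\<forall>s. s + 4/3 \<in> Dplus (sqrt (2/3)) \<longrightarrow>
       cmod (2 + r1 s + csqrt (s + 4/3)) < cmod (s + 4/3) \<and>
       cmod (2 + r2 s - csqrt (s + 4/3)) < cmod (s + 4/3) \<and>
       cmod (r3 s - 1 + (s + 4/3) / 3) < (cmod (s + 4/3)) ^ 2) \<and>
    (\<forall>s\<in>Dplus (1/10). \<forall>R1 R2 R3.
       root_labeling s R1 R2 R3 (r1 s) (r2 s) (r3 s) \<longrightarrow>
       real_analytic_on {0<..<1} R2 \<and> real_analytic_on {0<..<1} R3) \<and>
    (\<forall>s. s + 4/3 \<in> Dplus (1/10) \<longrightarrow> (\<forall>R1 R2 R3.
       root_labeling s R1 R2 R3 (r1 s) (r2 s) (r3 s) \<longrightarrow>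
       real_analytic_on {0<..<1} R1 \<and> real_analytic_on {0<..<1} R2)) \<and>
    (\<forall>s\<in>Dplus (21/4). cmod (r1 s) < 399/100 \<and> cmod (r2 s) < 399/100 \<and> cmod (r3 s) < 399/100)"
proof -
  obtain r1 where r1: "r1 holomorphic_on UHP" "\<forall>s\<in>UHP. r1 s + 1 \<in> O1 \<and> P s (r1 s) = 0"
    using root_fun[of O1] by blast
  obtain r2 where r2: "r2 holomorphic_on UHP" "\<forall>s\<in>UHP. r2 s + 1 \<in> O2 \<and> P s (r2 s) = 0"
    using root_fun[of O2] by blast
  obtain r3 where r3: "r3 holomorphic_on UHP" "\<forall>s\<in>UHP. r3 s + 1 \<in> O3 \<and> P s (r3 s) = 0"
    using root_fun[of O3] by blast
  have g: "good r1 r2 r3" unfolding good_def using r1(2) r2(2) r3(2) by blast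
  have H0: "\<forall>s\<in>UHP. P s (r1 s) = 0 \<and> P s (r2 s) = 0 \<and> P s (r3 s) = 0 \<and>
       r1 s \<noteq> r2 s \<and> r1 s \<noteq> r3 s \<and> r2 s \<noteq> r3 s"
    using r1(2) r2(2) r3(2) good_distinct[OF g] by blast
  have H1: "\<forall>s\<in>UHP.
       Im (r1 s) < 0 \<and> Re (r1 s) < -2 \<and>
       Im (r2 s) > 0 \<and> Arg (r2 s) > arctan (3/2) \<and> Arg (r2 s + 2) < pi - arctan (3/2) \<and>
       Im (r3 s) < 0 \<and> Re (r3 s) > 0"
    using good_regions[OF g] by blast
  have H2: "\<forall>s\<in>Dplus (sqrt (2/3)).
       cmod (r1 s + 3 + s / 3) < (cmod s) ^ 2 \<and>
       cmod (r2 s - \<i> * csqrt s) < cmod s \<and>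
       cmod (r3 s + \<i> * csqrt s) < cmod s"
  proof
    fix s assume "s \<in> Dplus (sqrt (2/3))"
    hence s0: "s \<in> UHP" "cmod s < sqrt (2/3)" unfolding Dplus_def UHP_def by auto
    have s: "s \<in> UHP" "cmod s < 1" using s0 sqrt23 by linarith+
    show "cmod (r1 s + 3 + s / 3) < (cmod s) ^ 2 \<and>
       cmod (r2 s - \<i> * csqrt s) < cmod s \<and>
       cmod (r3 s + \<i> * csqrt s) < cmod s" using part_i[OF g s] by blast
  qed
  have H3: "\<forall>s. s + 4/3 \<in> Dplus (sqrt (2/3)) \<longrightarrow>
       cmod (2 + r1 s + csqrt (s + 4/3)) < cmod (s + 4/3) \<and>
       cmod (2 + r2 s - csqrt (s + 4/3)) < cmod (s + 4/3) \<and>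
       cmod (r3 s - 1 + (s + 4/3) / 3) < (cmod (s + 4/3)) ^ 2"
    using part_ii[OF g] by blast
  have H4: "\<forall>s\<in>Dplus (1/10). \<forall>R1 R2 R3.
       root_labeling s R1 R2 R3 (r1 s) (r2 s) (r3 s) \<longrightarrow>
       real_analytic_on {0<..<1} R2 \<and> real_analytic_on {0<..<1} R3"
  proof (intro ballI allI impI)
    fix s R1 R2 R3 assume s: "s \<in> Dplus (1/10)" and L: "root_labeling s R1 R2 R3 (r1 s) (r2 s) (r3 s)"
    have "s \<in> UHP" using s unfolding Dplus_def UHP_def by auto
    from part_iii[OF g r1(1) r2(1) r3(1) this L]
    show "real_analytic_on {0<..<1} R2 \<and> real_analytic_on {0<..<1} R3" by blast
  qed
  have H5: "\<forall>s. s + 4/3 \<in> Dplus (1/10) \<longrightarrow> (\<forall>R1 R2 R3.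
       root_labeling s R1 R2 R3 (r1 s) (r2 s) (r3 s) \<longrightarrow>
       real_analytic_on {0<..<1} R1 \<and> real_analytic_on {0<..<1} R2)"
  proof (intro allI impI)
    fix s R1 R2 R3 assume s: "s + 4/3 \<in> Dplus (1/10)" and L: "root_labeling s R1 R2 R3 (r1 s) (r2 s) (r3 s)"
    have "s \<in> UHP" using s unfolding Dplus_def UHP_def by auto
    from part_iii[OF g r1(1) r2(1) r3(1) this L]
    show "real_analytic_on {0<..<1} R1 \<and> real_analytic_on {0<..<1} R2" by blast
  qed
  have H6: "\<forall>s\<in>Dplus (21/4). cmod (r1 s) < 399/100 \<and> cmod (r2 s) < 399/100 \<and> cmod (r3 s) < 399/100"
  proof
    fix s assume "s \<in> Dplus (21/4)"
    hence s: "s \<in> UHP" "cmod s < 21/4" unfolding Dplus_def UHP_def by auto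
    show "cmod (r1 s) < 399/100 \<and> cmod (r2 s) < 399/100 \<and> cmod (r3 s) < 399/100"
      using part_iv[OF _ s(2)] r1(2) r2(2) r3(2) s(1) by blast
  qed
  show ?thesis
    by (rule exI[of _ r1], rule exI[of _ r2], rule exI[of _ r3])
       (intro conjI; (rule r1(1) r2(1) r3(1) H0 H1 H2 H3 H4 H5 H6)?)
qed

end
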